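(* Let $\phi:\mathbb{R}^{d}\to\mathbb{R}^{d}$ be a $C^{2}$ diffeomorphism, $x_{1},y_{1}\in\mathbb{R}^{d}$, $x_{j}=\phi^{j-1}(x_{1})$, $y_{j}=\phi^{j-1}(y_{1})$. Then the following matrices have rank equal to their number of rows: (a) the matrix $\binom{V(x_{1})}{V(y_{1})}$, provided $x_{1},\ldots,x_{D-1},y_{1},\ldots,y_{D-1}$ are distinct; (b) the matrix $\binom{V(x_{1})}{\mathfrak{m}_{k}}$, where $\mathfrak{m}_{k}$ consists of the first $k$ rows of $V(y_{1})$, provided $x_{1},\ldots,x_{D-1},y_{1},\ldots,y_{k}$ are distinct; (c) for an integer $D^{+}\leq2D$, the $(D^{+}-1)\times D_{\alpha}$ matrix whose rows $j=1,\ldots,D^{+}-1$ are the gradients with respect to $c$ at $c=0$ of $c\mapsto\pi_{1}\phi_{c}^{j}(x_{1})$, provided $x_{1},\ldots,x_{D^{+}-1}$ are distinct.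
   Context: $\pi_{1}$ is the first coordinate projection, $\mathbf{e}_{1}=(1,0,\ldots,0)$. For a multi-index $\alpha\in\mathbb{Z}_{\geq0}^{d}$, $p_{\alpha}(x)=\prod_i(\pi_{i}x)^{\alpha_{i}}$; $\mathcal{I}_{2D-1}$ is the set of multi-indices with $|\alpha|\leq2D-1$, of cardinality $D_{\alpha}$. For $c=(c_{\alpha})\in\mathbb{R}^{D_{\alpha}}$, $\phi_{c}(x)=\phi(x)+\mathbf{e}_{1}\sum_{\alpha\in\mathcal{I}_{2D-1}}c_{\alpha}p_{\alpha}(x)$. For $z\in\mathbb{R}^{d}$, $V(z)$ is the $(D-1)\times D_{\alpha}$ matrix whose row $j$ ($j=1,\ldots,D-1$) is the gradient with respect to $c$ at $c=0$ of $c\mapsto\pi_{1}\phi_{c}^{j}(z)$. *)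

theory Defs
  imports "HOL-Analysis.Analysis" "Jordan_Normal_Form.DL_Rank"
begin

text \<open>R^d is modelled by an arbitrary Euclidean space 'a; coordinates are
  inner products with the elements of Basis.\<close>

definition C2_map :: "('a::euclidean_space \<Rightarrow> 'a) \<Rightarrow> bool" where
  "C2_map f \<longleftrightarrow> (\<exists>Df :: 'a \<Rightarrow> ('a \<Rightarrow>\<^sub>L 'a). \<exists>D2f :: 'a \<Rightarrow> ('a \<Rightarrow>\<^sub>L ('a \<Rightarrow>\<^sub>L 'a)).
      (\<forall>x. (f has_derivative blinfun_apply (Df x)) (at x)) \<and>
      (\<forall>x. (Df has_derivative blinfun_apply (D2f x)) (at x)) \<and>
      continuous_on UNIV D2f)"

definition C2_diffeo :: "('a::euclidean_space \<Rightarrow> 'a) \<Rightarrow> bool" where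
  "C2_diffeo f \<longleftrightarrow> bij f \<and> C2_map f \<and> C2_map (inv_into UNIV f)"

definition mindices :: "nat \<Rightarrow> ('a::euclidean_space \<Rightarrow> nat) set" where
  "mindices D = {\<alpha>. (\<forall>b. b \<notin> Basis \<longrightarrow> \<alpha> b = 0) \<and> (\<Sum>b\<in>Basis. \<alpha> b) \<le> 2 * D - 1}"

definition pmono :: "('a::euclidean_space \<Rightarrow> nat) \<Rightarrow> 'a \<Rightarrow> real" where
  "pmono \<alpha> x = (\<Prod>b\<in>Basis. (x \<bullet> b) ^ (\<alpha> b))"

text \<open>The perturbed map phi_c; e1 is the distinguished first basis vector.\<close>
definition phi_c :: "('a::euclidean_space \<Rightarrow> 'a) \<Rightarrow> 'a \<Rightarrow> nat \<Rightarrow> (('a \<Rightarrow> nat) \<Rightarrow> real) \<Rightarrow> 'a \<Rightarrow> 'a" where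
  "phi_c \<phi> e1 D c x = \<phi> x + (\<Sum>\<alpha>\<in>mindices D. c \<alpha> * pmono \<alpha> x) *\<^sub>R e1"

definition grad_c0 :: "((('a \<Rightarrow> nat) \<Rightarrow> real) \<Rightarrow> real) \<Rightarrow> ('a \<Rightarrow> nat) \<Rightarrow> real" where
  "grad_c0 F \<alpha> = deriv (\<lambda>t. F (\<lambda>\<beta>. if \<beta> = \<alpha> then t else 0)) 0"

definition row_grad :: "('a::euclidean_space \<Rightarrow> 'a) \<Rightarrow> 'a \<Rightarrow> nat \<Rightarrow> 'a \<Rightarrow> nat \<Rightarrow> ('a \<Rightarrow> nat) \<Rightarrow> real" where
  "row_grad \<phi> e1 D z j = grad_c0 (\<lambda>c. ((phi_c \<phi> e1 D c) ^^ j) z \<bullet> e1)"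

definition Vrows :: "('a::euclidean_space \<Rightarrow> 'a) \<Rightarrow> 'a \<Rightarrow> nat \<Rightarrow> 'a \<Rightarrow> (('a \<Rightarrow> nat) \<Rightarrow> real) list" where
  "Vrows \<phi> e1 D z = map (row_grad \<phi> e1 D z) [1..<D]"

text \<open>A fixed enumeration of the column index set (an ordering of the
  multi-indices); the rank does not depend on it.\<close>
definition col_enum :: "nat \<Rightarrow> nat \<Rightarrow> ('a::euclidean_space \<Rightarrow> nat)" where
  "col_enum D = (SOME f. bij_betw f {..<card (mindices D :: ('a \<Rightarrow> nat) set)} (mindices D))"

definition rows_mat :: "nat \<Rightarrow> (('a::euclidean_space \<Rightarrow> nat) \<Rightarrow> real) list \<Rightarrow> real mat" where
  "rows_mat D rs = mat (length rs) (card (mindices D :: ('a \<Rightarrow> nat) set))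
      (\<lambda>(j, k). (rs ! j) (col_enum D k))"

definition mat_rank :: "real mat \<Rightarrow> nat" where
  "mat_rank A = vec_space.rank (dim_row A) A"

end

theory Submission
  imports Defs
begin

no_notation Matrix.scalar_prod (infix \<open>\<bullet>\<close> 70)

lemma (in vec_space) rank_right_inv:
  assumes A: "A \<in> carrier_mat n nc" and R: "R \<in> carrier_mat nc n" and AR: "A * R = 1\<^sub>m n"
  shows "rank A = n"
proof -
  have cs: "set (cols A) \<subseteq> carrier_vec n" using A cols_dim by blast
  have "span (set (cols A)) = carrier_vec n"
  proof
    show "span (set (cols A)) \<subseteq> carrier_vec n" using span_closed[OF cs] by auto
  next
    show "carrier_vec n \<subseteq> span (set (cols A))"
    proof
      fix v :: "'a vec" assume v: "v \<in> carrier_vec n"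
      define w where "w = R *\<^sub>v v"
      have w: "w \<in> carrier_vec nc" using R v w_def by auto
      have "A *\<^sub>v w = (A * R) *\<^sub>v v" unfolding w_def using A R v by (simp add: assoc_mult_mat_vec)
      also have "\<dots> = v" using AR v by simp
      finally have eq: "v = A *\<^sub>v w" by simp
      have mc: "mat_of_cols n (cols A) = A" using A mat_of_cols_cols[of A] by auto
      have vw: "vec nc (\<lambda>i. w $ i) = w" using w by (intro eq_vecI) auto
      have dv: "\<forall>u\<in>set (cols A). dim_vec u = n" using cs by auto
      have lc: "lincomb_list (\<lambda>i. w $ i) (cols A) = mat_of_cols n (cols A) *\<^sub>v vec (length (cols A)) (\<lambda>i. w $ i)"
        by (rule lincomb_list_as_mat_mult[OF dv])
      have ln: "length (cols A) = nc" using A by simp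
      have "A *\<^sub>v w = lincomb_list (\<lambda>i. w $ i) (cols A)"
        unfolding lc ln mc vw ..
      also have "\<dots> \<in> span_list (cols A)" unfolding span_list_def by auto
      also have "span_list (cols A) = span (set (cols A))" using span_list_as_span[OF cs] .
      finally show "v \<in> span (set (cols A))" using eq by simp
    qed
  qed
  then have "rank A = vectorspace.dim class_ring (vs (carrier_vec n))" unfolding rank_def by simp
  also have "vs (carrier_vec n) = V" by simp
  also have "vectorspace.dim class_ring V = n" using dim_is_n by simp
  finally show ?thesis .
qed


definition mon :: "nat \<Rightarrow> ('a::euclidean_space \<Rightarrow> nat) set" where
  "mon n = {\<alpha>. (\<forall>b. b \<notin> Basis \<longrightarrow> \<alpha> b = 0) \<and> (\<Sum>b\<in>Basis. \<alpha> b) \<le> n}"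

definition polyfun :: "nat \<Rightarrow> ('a::euclidean_space \<Rightarrow> real) \<Rightarrow> bool" where
  "polyfun n f \<longleftrightarrow> (\<exists>c. f = (\<lambda>x. \<Sum>\<alpha>\<in>mon n. c \<alpha> * pmono \<alpha> x))"

lemma mindices_mon: "mindices D = mon (2 * D - 1)"
  unfolding mindices_def mon_def by simp

lemma finite_mon: "finite (mon n :: ('a::euclidean_space \<Rightarrow> nat) set)"
proof -
  let ?g = "\<lambda>f::'a \<Rightarrow> nat. \<lambda>b. if b \<in> Basis then f b else 0"
  have "mon n \<subseteq> ?g ` (PiE Basis (\<lambda>_. {..n}))"
  proof
    fix \<alpha> :: "'a \<Rightarrow> nat" assume a: "\<alpha> \<in> mon n"
    have "\<alpha> = ?g (restrict \<alpha> Basis)" using a unfolding mon_def by (auto simp: fun_eq_iff)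
    moreover have "restrict \<alpha> Basis \<in> PiE Basis (\<lambda>_. {..n})"
    proof -
      have "\<alpha> b \<le> n" if "b \<in> Basis" for b
      proof -
        have "\<alpha> b \<le> (\<Sum>b\<in>Basis. \<alpha> b)" using that by (intro member_le_sum) auto
        then show ?thesis using a unfolding mon_def by auto
      qed
      then show ?thesis by auto
    qed
    ultimately show "\<alpha> \<in> ?g ` (PiE Basis (\<lambda>_. {..n}))" by blast
  qed
  moreover have "finite (PiE Basis (\<lambda>_::'a. {..n}))" by (intro finite_PiE) auto
  ultimately show ?thesis by (meson finite_imageI finite_subset)
qed

lemma mon_mono: "n \<le> m \<Longrightarrow> mon n \<subseteq> mon m"
  unfolding mon_def by auto

lemma polyfun_mono:
  assumes "polyfun n f" "n \<le> m" shows "polyfun m f"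
proof -
  obtain c where f: "f = (\<lambda>x. \<Sum>\<alpha>\<in>mon n. c \<alpha> * pmono \<alpha> x)" using assms unfolding polyfun_def by blast
  define c' where "c' = (\<lambda>\<alpha>. if \<alpha> \<in> mon n then c \<alpha> else 0)"
  have "f x = (\<Sum>\<alpha>\<in>mon m. c' \<alpha> * pmono \<alpha> x)" for x
    unfolding f c'_def
    by (rule sum.mono_neutral_cong_left) (use mon_mono[OF assms(2)] finite_mon in auto)
  then show ?thesis unfolding polyfun_def by blast
qed

lemma pmono_zero: "pmono (\<lambda>_. 0) x = 1"
  unfolding pmono_def by simp

lemma mon_0: "mon 0 = {\<lambda>_. 0}"
proof -
  have "\<alpha> = (\<lambda>_. 0)" if "\<alpha> \<in> mon 0" for \<alpha> :: "'a \<Rightarrow> nat"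
  proof
    fix b show "\<alpha> b = 0"
      using that unfolding mon_def by (cases "b \<in> Basis") auto
  qed
  then show ?thesis unfolding mon_def by auto
qed

lemma polyfun_const: "polyfun n (\<lambda>x. a)"
proof -
  have "polyfun 0 (\<lambda>x::'a. a)"
    unfolding polyfun_def mon_0 by (rule exI[of _ "\<lambda>_. a"]) (simp add: pmono_zero)
  then show ?thesis by (rule polyfun_mono) simp
qed

lemma polyfun_add:
  assumes "polyfun n f" "polyfun n g" shows "polyfun n (\<lambda>x. f x + g x)"
proof -
  obtain c where f: "f = (\<lambda>x. \<Sum>\<alpha>\<in>mon n. c \<alpha> * pmono \<alpha> x)" using assms unfolding polyfun_def by blast
  obtain d where g: "g = (\<lambda>x. \<Sum>\<alpha>\<in>mon n. d \<alpha> * pmono \<alpha> x)" using assms unfolding polyfun_def by blast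
  show ?thesis unfolding polyfun_def f g
    by (rule exI[of _ "\<lambda>\<alpha>. c \<alpha> + d \<alpha>"]) (simp add: sum.distrib algebra_simps)
qed

lemma polyfun_scale:
  assumes "polyfun n f" shows "polyfun n (\<lambda>x. a * f x)"
proof -
  obtain c where f: "f = (\<lambda>x. \<Sum>\<alpha>\<in>mon n. c \<alpha> * pmono \<alpha> x)" using assms unfolding polyfun_def by blast
  show ?thesis unfolding polyfun_def f
    by (rule exI[of _ "\<lambda>\<alpha>. a * c \<alpha>"]) (simp add: sum_distrib_left algebra_simps)
qed

lemma polyfun_sum:
  assumes "finite S" "\<And>s. s \<in> S \<Longrightarrow> polyfun n (f s)" shows "polyfun n (\<lambda>x. \<Sum>s\<in>S. f s x)"
  using assms
proof (induction S rule: finite_induct)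
  case empty then show ?case using polyfun_const[of n 0] by simp
next
  case (insert s S)
  then show ?case by (simp add: polyfun_add)
qed

lemma polyfun_mult_coord:
  assumes "polyfun n f" and b: "b \<in> Basis" shows "polyfun (Suc n) (\<lambda>x. f x * (x \<bullet> b))"
proof -
  obtain c where f: "f = (\<lambda>x. \<Sum>\<alpha>\<in>mon n. c \<alpha> * pmono \<alpha> x)" using assms unfolding polyfun_def by blast
  define sh where "sh = (\<lambda>\<alpha>::'a \<Rightarrow> nat. \<alpha>(b := Suc (\<alpha> b)))"
  define unsh where "unsh = (\<lambda>\<alpha>::'a \<Rightarrow> nat. \<alpha>(b := \<alpha> b - 1))"
  have unsh_sh: "unsh (sh \<alpha>) = \<alpha>" for \<alpha> unfolding sh_def unsh_def by auto
  have inj: "inj sh" by (metis injI unsh_sh)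
  have pm: "pmono (sh \<alpha>) x = pmono \<alpha> x * (x \<bullet> b)" for \<alpha> x
  proof -
    have "pmono (sh \<alpha>) x = (x \<bullet> b) ^ Suc (\<alpha> b) * (\<Prod>b'\<in>Basis - {b}. (x \<bullet> b') ^ (\<alpha> b'))"
      unfolding pmono_def sh_def using b by (simp add: prod.remove)
    also have "\<dots> = pmono \<alpha> x * (x \<bullet> b)"
      unfolding pmono_def using b by (simp add: prod.remove)
    finally show ?thesis .
  qed
  have shm: "sh \<alpha> \<in> mon (Suc n)" if "\<alpha> \<in> mon n" for \<alpha>
  proof -
    have "(\<Sum>b'\<in>Basis. sh \<alpha> b') = Suc (\<alpha> b) + (\<Sum>b'\<in>Basis - {b}. \<alpha> b')"
      unfolding sh_def using b by (simp add: sum.remove)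
    also have "\<dots> = Suc (\<Sum>b'\<in>Basis. \<alpha> b')" using b by (simp add: sum.remove)
    finally show ?thesis using that b unfolding mon_def sh_def by auto
  qed
  define e where "e = (\<lambda>\<gamma>. if \<gamma> \<in> sh ` mon n then c (unsh \<gamma>) else 0)"
  have "f x * (x \<bullet> b) = (\<Sum>\<gamma>\<in>mon (Suc n). e \<gamma> * pmono \<gamma> x)" for x
  proof -
    have "f x * (x \<bullet> b) = (\<Sum>\<alpha>\<in>mon n. c \<alpha> * pmono (sh \<alpha>) x)"
      unfolding f pm sum_distrib_right by (simp add: mult.assoc)
    also have "\<dots> = (\<Sum>\<gamma>\<in>sh ` mon n. c (unsh \<gamma>) * pmono \<gamma> x)"
      by (subst sum.reindex) (use inj in \<open>auto simp: unsh_sh inj_on_def\<close>)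
    also have "\<dots> = (\<Sum>\<gamma>\<in>mon (Suc n). e \<gamma> * pmono \<gamma> x)"
      unfolding e_def
      by (rule sum.mono_neutral_cong_left) (use shm finite_mon in auto)
    finally show ?thesis .
  qed
  then show ?thesis unfolding polyfun_def by blast
qed

lemma polyfun_mult_affine:
  assumes "polyfun n f" shows "polyfun (Suc n) (\<lambda>x. f x * (x \<bullet> u + a))"
proof -
  have eq: "f x * (x \<bullet> u + a) = (\<Sum>b\<in>Basis. (u \<bullet> b) * (f x * (x \<bullet> b))) + a * f x" for x
  proof -
    have "x \<bullet> u = (\<Sum>b\<in>Basis. (x \<bullet> b) * (u \<bullet> b))" by (rule euclidean_inner)
    then show ?thesis by (simp add: algebra_simps sum_distrib_left sum_distrib_right)
  qed
  have "polyfun (Suc n) (\<lambda>x. (\<Sum>b\<in>Basis. (u \<bullet> b) * (f x * (x \<bullet> b))))"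
    by (intro polyfun_sum polyfun_scale polyfun_mult_coord assms) auto
  moreover have "polyfun (Suc n) (\<lambda>x. a * f x)"
    by (intro polyfun_scale polyfun_mono[OF assms]) auto
  ultimately show ?thesis unfolding eq by (rule polyfun_add)
qed

lemma polyfun_prod:
  assumes "finite S" shows "polyfun (card S) (\<lambda>x. \<Prod>l\<in>S. (x \<bullet> u l + a l))"
  using assms
proof (induction S rule: finite_induct)
  case empty then show ?case using polyfun_const[of 0 1] by simp
next
  case (insert s S)
  then show ?case using polyfun_mult_affine[OF insert.IH, of "u s" "a s"]
    by (simp add: mult.commute)
qed

lemma interp:
  fixes P :: "'a::euclidean_space list"
  assumes "distinct P" "length P \<le> 2 * D" "i < length P"
  shows "\<exists>c. \<forall>l<length P. (\<Sum>\<alpha>\<in>mindices D. c \<alpha> * pmono \<alpha> (P ! l)) = (if l = i then 1 else 0)"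
proof -
  define S where "S = {l. l < length P \<and> l \<noteq> i}"
  define u where "u = (\<lambda>l. P ! i - P ! l)"
  define a where "a = (\<lambda>l. - (P ! l \<bullet> u l))"
  define q where "q = (\<lambda>x. \<Prod>l\<in>S. (x \<bullet> u l + a l))"
  have fS: "finite S" unfolding S_def by auto
  have cS: "card S = length P - 1"
  proof -
    have "S = {..<length P} - {i}" unfolding S_def by auto
    then show ?thesis using assms(3) by simp
  qed
  have pq: "polyfun (card S) q" unfolding q_def by (rule polyfun_prod[OF fS])
  define K where "K = q (P ! i)"
  have K: "K \<noteq> 0"
  proof -
    have "P ! i \<bullet> u l + a l \<noteq> 0" if "l \<in> S" for l
    proof -
      have "P ! i \<bullet> u l + a l = u l \<bullet> u l" unfolding a_def u_def by (simp add: algebra_simps inner_diff_left)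
      moreover have "u l \<noteq> 0" using that assms(1,3) unfolding S_def u_def by (simp add: nth_eq_iff_index_eq)
      ultimately show ?thesis by simp
    qed
    then show ?thesis unfolding K_def q_def using fS by (simp add: prod_zero_iff)
  qed
  have "polyfun (card S) (\<lambda>x. (1 / K) * q x)" by (rule polyfun_scale[OF pq])
  then have "polyfun (2 * D - 1) (\<lambda>x. (1 / K) * q x)"
    by (rule polyfun_mono) (use cS assms(2,3) in auto)
  then obtain c where c: "(\<lambda>x. (1 / K) * q x) = (\<lambda>x. \<Sum>\<alpha>\<in>mindices D. c \<alpha> * pmono \<alpha> x)"
    unfolding polyfun_def mindices_mon by blast
  have "(\<Sum>\<alpha>\<in>mindices D. c \<alpha> * pmono \<alpha> (P ! l)) = (if l = i then 1 else 0)" if "l < length P" for l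
  proof -
    have "(\<Sum>\<alpha>\<in>mindices D. c \<alpha> * pmono \<alpha> (P ! l)) = (1 / K) * q (P ! l)" using fun_cong[OF c, of "P ! l"] by simp
    also have "\<dots> = (if l = i then 1 else 0)"
    proof (cases "l = i")
      case True then show ?thesis using K unfolding K_def by simp
    next
      case False
      then have "l \<in> S" using that unfolding S_def by auto
      moreover have "P ! l \<bullet> u l + a l = 0" unfolding a_def by simp
      ultimately have "q (P ! l) = 0" unfolding q_def using fS by (auto simp: prod_zero_iff)
      then show ?thesis using False by simp
    qed
    finally show ?thesis .
  qed
  then show ?thesis by blast
qed


lemma col_enum_bij: "bij_betw (col_enum D) {..<card (mindices D :: ('a::euclidean_space \<Rightarrow> nat) set)} (mindices D :: ('a \<Rightarrow> nat) set)"
proof -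
  have fin: "finite (mindices D :: ('a \<Rightarrow> nat) set)" unfolding mindices_mon by (rule finite_mon)
  obtain h where "bij_betw h {0..<card (mindices D :: ('a \<Rightarrow> nat) set)} (mindices D :: ('a \<Rightarrow> nat) set)"
    using ex_bij_betw_nat_finite[OF fin] by (elim exE)
  then have "bij_betw h {..<card (mindices D :: ('a \<Rightarrow> nat) set)} (mindices D :: ('a \<Rightarrow> nat) set)"
    by (simp only: atLeast0LessThan)
  then show ?thesis unfolding col_enum_def by (rule someI[where x=h])
qed

lemma choice2:
  assumes "\<forall>j<n. \<exists>T B. Q j T B" shows "\<exists>TT BB. \<forall>j<n. Q j (TT j) (BB j)"
proof -
  have "\<forall>j. \<exists>p. j < n \<longrightarrow> Q j (fst p) (snd p)" using assms by auto
  from choice[OF this] obtain f where f: "\<forall>j. j < n \<longrightarrow> Q j (fst (f j)) (snd (f j))" by (elim exE)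
  show ?thesis by (rule exI[of _ "\<lambda>j. fst (f j)"], rule exI[of _ "\<lambda>j. snd (f j)"]) (use f in auto)
qed

lemma choice1:
  assumes "\<forall>j<n. \<exists>c. Q j c" shows "\<exists>cc. \<forall>j<n. Q j (cc j)"
proof -
  have "\<forall>j. \<exists>c. j < n \<longrightarrow> Q j c" using assms by auto
  from choice[OF this] obtain f where f: "\<forall>j. j < n \<longrightarrow> Q j (f j)" by (elim exE)
  then show ?thesis by auto
qed

lemma rank_tri:
  fixes rs :: "(('a::euclidean_space \<Rightarrow> nat) \<Rightarrow> real) list" and P :: "'a list"
  assumes dP: "distinct P" and len: "length P = length rs" and le: "length rs \<le> 2 * D"
  and rows: "\<forall>j<length rs. \<exists>T B. T \<subseteq> {..<j} \<and>
      (\<forall>\<alpha>\<in>mindices D. (rs ! j) \<alpha> = pmono \<alpha> (P ! j) + (\<Sum>i\<in>T. B i * pmono \<alpha> (P ! i)))"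
  shows "mat_rank (rows_mat D rs) = length rs"
proof -
  define n where "n = length rs"
  define M where "M = (mindices D :: ('a \<Rightarrow> nat) set)"
  define nc where "nc = card M"
  have fM: "finite M" unfolding M_def mindices_mon by (rule finite_mon)
  from choice2[OF rows] obtain TT BB where TB0: "\<forall>j<length rs. TT j \<subseteq> {..<j} \<and>
      (\<forall>\<alpha>\<in>mindices D. (rs ! j) \<alpha> = pmono \<alpha> (P ! j) + (\<Sum>i\<in>TT j. BB j i * pmono \<alpha> (P ! i)))"
    by (elim exE)
  have TB: "TT j \<subseteq> {..<j} \<and>
      (\<forall>\<alpha>\<in>M. (rs ! j) \<alpha> = pmono \<alpha> (P ! j) + (\<Sum>i\<in>TT j. BB j i * pmono \<alpha> (P ! i)))" if "j < n" for j
    using TB0 that unfolding n_def M_def by simp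
  define Bf where "Bf = (\<lambda>j i. if i = j then 1 else if i \<in> TT j then BB j i else (0::real))"
  have rowsB: "(rs ! j) \<alpha> = (\<Sum>i<n. Bf j i * pmono \<alpha> (P ! i))" if j: "j < n" and a: "\<alpha> \<in> M" for j \<alpha>
  proof -
    have T: "TT j \<subseteq> {..<j}" using TB[OF j] by blast
    have fT: "finite (TT j)" using T finite_subset by blast
    have jT: "j \<notin> TT j" using T by auto
    have "(\<Sum>i<n. Bf j i * pmono \<alpha> (P ! i)) = (\<Sum>i\<in>insert j (TT j). Bf j i * pmono \<alpha> (P ! i))"
      by (rule sum.mono_neutral_cong_right) (use T j in \<open>auto simp: Bf_def\<close>)
    also have "\<dots> = pmono \<alpha> (P ! j) + (\<Sum>i\<in>TT j. Bf j i * pmono \<alpha> (P ! i))"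
      using fT jT by (simp add: Bf_def)
    also have "(\<Sum>i\<in>TT j. Bf j i * pmono \<alpha> (P ! i)) = (\<Sum>i\<in>TT j. BB j i * pmono \<alpha> (P ! i))"
      by (rule sum.cong) (use jT in \<open>auto simp: Bf_def\<close>)
    finally show ?thesis using TB[OF j] a by simp
  qed
  have Bup: "Bf j i = 0" if "j < i" "j < n" for i j
  proof -
    have "i \<notin> TT j" using TB[OF that(2)] \<open>j < i\<close> by auto
    then show ?thesis using \<open>j < i\<close> unfolding Bf_def by auto
  qed
  have "\<forall>i<n. \<exists>c. \<forall>l<n. (\<Sum>\<alpha>\<in>M. c \<alpha> * pmono \<alpha> (P ! l)) = (if l = i then 1 else 0)"
    using interp[OF dP, of D] le len unfolding n_def M_def by simp
  from choice1[OF this] obtain c where c0: "\<forall>i<n. \<forall>l<n. (\<Sum>\<alpha>\<in>M. c i \<alpha> * pmono \<alpha> (P ! l)) = (if l = i then 1 else 0)"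
    by (elim exE)
  have c: "(\<Sum>\<alpha>\<in>M. c i \<alpha> * pmono \<alpha> (P ! l)) = (if l = i then 1 else 0)" if "i < n" "l < n" for i l
    using c0 that by blast
  have bij: "bij_betw (col_enum D) {..<nc} M" unfolding nc_def M_def by (rule col_enum_bij)
  define A where "A = rows_mat D rs"
  have A: "A \<in> carrier_mat n nc" unfolding A_def rows_mat_def n_def nc_def M_def by simp
  have Aij: "A $$ (j, k) = (rs ! j) (col_enum D k)" if "j < n" "k < nc" for j k
    using that unfolding A_def rows_mat_def n_def nc_def M_def by simp
  define Rm where "Rm = mat nc n (\<lambda>(k, i). c i (col_enum D k))"
  define Bm where "Bm = mat n n (\<lambda>(j, i). Bf j i)"
  have Rm: "Rm \<in> carrier_mat nc n" unfolding Rm_def by simp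
  have Bm: "Bm \<in> carrier_mat n n" unfolding Bm_def by simp
  have ARB: "A * Rm = Bm"
  proof (rule eq_matI)
    fix j i assume j: "j < dim_row Bm" and i: "i < dim_col Bm"
    then have j: "j < n" and i: "i < n" using Bm by auto
    have "(A * Rm) $$ (j, i) = (\<Sum>k<nc. A $$ (j, k) * Rm $$ (k, i))"
      using A Rm j i by (simp add: scalar_prod_def lessThan_atLeast0)
    also have "\<dots> = (\<Sum>k<nc. (rs ! j) (col_enum D k) * c i (col_enum D k))"
      by (rule sum.cong) (use j i in \<open>auto simp: Aij Rm_def\<close>)
    also have "\<dots> = (\<Sum>\<alpha>\<in>M. (rs ! j) \<alpha> * c i \<alpha>)"
      by (rule sum.reindex_bij_betw[OF bij])
    also have "\<dots> = (\<Sum>\<alpha>\<in>M. \<Sum>l<n. Bf j l * (c i \<alpha> * pmono \<alpha> (P ! l)))"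
      by (rule sum.cong[OF refl]) (simp add: rowsB[OF j] sum_distrib_left sum_distrib_right mult_ac)
    also have "\<dots> = (\<Sum>l<n. Bf j l * (\<Sum>\<alpha>\<in>M. c i \<alpha> * pmono \<alpha> (P ! l)))"
      by (subst sum.swap) (simp add: sum_distrib_left)
    also have "\<dots> = (\<Sum>l<n. Bf j l * (if l = i then 1 else 0))"
      by (rule sum.cong) (use c i in auto)
    also have "\<dots> = Bf j i" using i by (simp add: if_distrib cong: if_cong)
    finally show "(A * Rm) $$ (j, i) = Bm $$ (j, i)" using i j unfolding Bm_def by simp
  qed (use A Rm Bm in auto)
  have "det Bm = prod_list (diag_mat Bm)"
    by (rule det_lower_triangular[OF _ Bm]) (auto simp: Bm_def Bup)
  also have "diag_mat Bm = replicate n 1"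
    by (rule nth_equalityI) (auto simp: diag_mat_def Bm_def Bf_def)
  finally have dB: "det Bm = 1" by simp
  have U: "Bm \<in> Units (ring_mat TYPE(real) n ())"
    by (rule det_non_zero_imp_unit[OF Bm]) (simp add: dB)
  obtain Bi where Bi: "Bm * Bi = 1\<^sub>m n" "Bi \<in> carrier_mat n n"
  proof (cases "mat_inverse Bm")
    case None then show ?thesis using mat_inverse(1)[OF Bm None, where b="()"] U by blast
  next
    case (Some B) then show ?thesis using mat_inverse(2)[OF Bm Some] that by blast
  qed
  have "A * (Rm * Bi) = 1\<^sub>m n"
    using A Rm Bi ARB by (simp add: assoc_mult_mat[symmetric, OF A Rm Bi(2)])
  then have "vec_space.rank n A = n"
    by (rule vec_space.rank_right_inv[OF A mult_carrier_mat[OF Rm Bi(2)]])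
  then show ?thesis using A unfolding mat_rank_def A_def n_def by simp
qed


definition cc :: "('a \<Rightarrow> nat) \<Rightarrow> real \<Rightarrow> ('a \<Rightarrow> nat) \<Rightarrow> real" where
  "cc \<alpha> t = (\<lambda>\<beta>. if \<beta> = \<alpha> then t else 0)"

fun Wf :: "('a::euclidean_space \<Rightarrow> ('a \<Rightarrow>\<^sub>L 'a)) \<Rightarrow> ('a \<Rightarrow> 'a) \<Rightarrow> 'a \<Rightarrow> 'a \<Rightarrow> nat \<Rightarrow> nat \<Rightarrow> 'a" where
  "Wf Df \<phi> e1 z 0 i = 0"
| "Wf Df \<phi> e1 z (Suc j) i = (if i = j then e1 else blinfun_apply (Df ((\<phi> ^^ j) z)) (Wf Df \<phi> e1 z j i))"

lemma phi_c_cc: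
  "phi_c \<phi> e1 D (cc \<alpha> t) x = \<phi> x + (if \<alpha> \<in> mindices D then t * pmono \<alpha> x else 0) *\<^sub>R e1"
proof -
  have "(\<Sum>\<beta>\<in>mindices D. cc \<alpha> t \<beta> * pmono \<beta> x) = (\<Sum>\<beta>\<in>mindices D. if \<beta> = \<alpha> then t * pmono \<beta> x else 0)"
    by (rule sum.cong) (auto simp: cc_def)
  also have "\<dots> = (if \<alpha> \<in> mindices D then t * pmono \<alpha> x else 0)"
    by (rule sum.delta) (simp add: mindices_mon finite_mon)
  finally show ?thesis unfolding phi_c_def by simp
qed

lemma pmono_has_derivative: "\<exists>P'. (pmono \<alpha> has_derivative P') (at y)"
proof -
  have "((\<lambda>x. \<Prod>b\<in>Basis. (x \<bullet> b) ^ (\<alpha> b)) has_derivative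
     (\<lambda>h. \<Sum>i\<in>Basis. (h \<bullet> i * (of_nat (\<alpha> i) * (y \<bullet> i) ^ (\<alpha> i - 1))) * (\<Prod>j\<in>Basis - {i}. (y \<bullet> j) ^ (\<alpha> j)))) (at y)"
    by (intro derivative_eq_intros refl) (auto simp: mult_ac)
  then show ?thesis unfolding pmono_def[abs_def] by blast
qed

lemma deriv_struct:
  fixes \<phi> :: "'a::euclidean_space \<Rightarrow> 'a" and Df :: "'a \<Rightarrow> ('a \<Rightarrow>\<^sub>L 'a)"
  assumes dphi: "\<And>x. (\<phi> has_derivative blinfun_apply (Df x)) (at x)"
  shows "((\<lambda>t. ((phi_c \<phi> e1 D (cc \<alpha> t)) ^^ j) z) has_vector_derivative
           (\<Sum>i<j. (if \<alpha> \<in> mindices D then pmono \<alpha> ((\<phi> ^^ i) z) else 0) *\<^sub>R Wf Df \<phi> e1 z j i)) (at 0)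
         \<and> ((phi_c \<phi> e1 D (cc \<alpha> 0)) ^^ j) z = (\<phi> ^^ j) z"
proof (induction j)
  case 0
  then show ?case by simp
next
  case (Suc j)
  define F where "F = (\<lambda>t. ((phi_c \<phi> e1 D (cc \<alpha> t)) ^^ j) z)"
  define pm where "pm = (\<lambda>i. if \<alpha> \<in> mindices D then pmono \<alpha> ((\<phi> ^^ i) z) else 0)"
  define V where "V = (\<Sum>i<j. pm i *\<^sub>R Wf Df \<phi> e1 z j i)"
  define zj where "zj = (\<phi> ^^ j) z"
  have FV: "(F has_vector_derivative V) (at 0)" and F0: "F 0 = zj"
    using Suc.IH unfolding F_def V_def pm_def zj_def by auto
  have Feq: "(\<lambda>t. ((phi_c \<phi> e1 D (cc \<alpha> t)) ^^ Suc j) z) =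
      (\<lambda>t. \<phi> (F t) + (if \<alpha> \<in> mindices D then t * pmono \<alpha> (F t) else 0) *\<^sub>R e1)"
    unfolding F_def by (simp add: phi_c_cc)
  have d1: "((\<lambda>t. \<phi> (F t)) has_vector_derivative blinfun_apply (Df zj) V) (at 0)"
  proof -
    have "((\<lambda>t. \<phi> (F t)) has_derivative (\<lambda>h. blinfun_apply (Df zj) (h *\<^sub>R V))) (at 0)"
      using has_derivative_compose[OF FV[unfolded has_vector_derivative_def] dphi[of "F 0"]] F0 by simp
    then show ?thesis unfolding has_vector_derivative_def by (simp add: blinfun.scaleR_right)
  qed
  have d2: "((\<lambda>t. (if \<alpha> \<in> mindices D then t * pmono \<alpha> (F t) else 0) *\<^sub>R e1) has_vector_derivative pm j *\<^sub>R e1) (at 0)"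
  proof (cases "\<alpha> \<in> mindices D")
    case True
    obtain P' where P': "(pmono \<alpha> has_derivative P') (at zj)" using pmono_has_derivative by blast
    have "((\<lambda>t. pmono \<alpha> (F t)) has_derivative (\<lambda>h. P' (h *\<^sub>R V))) (at 0)"
      using has_derivative_compose[OF FV[unfolded has_vector_derivative_def], of "pmono \<alpha>" P'] P' F0 by simp
    moreover have "(\<lambda>h. P' (h *\<^sub>R V)) = (\<lambda>h. P' V * h)"
    proof
      fix h :: real
      have "linear P'" using has_derivative_linear[OF P'] .
      then have "P' (h *\<^sub>R V) = h *\<^sub>R P' V" by (rule linear_scale)
      then show "P' (h *\<^sub>R V) = P' V * h" by simp
    qed
    ultimately have "((\<lambda>t. pmono \<alpha> (F t)) has_field_derivative P' V) (at 0)"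
      unfolding has_field_derivative_def by simp
    then have "((\<lambda>t. t * pmono \<alpha> (F t)) has_field_derivative 1 * pmono \<alpha> (F 0) + P' V * 0) (at 0)"
      by (intro DERIV_mult DERIV_ident)
    then have "((\<lambda>t. t * pmono \<alpha> (F t)) has_field_derivative pm j) (at 0)"
      using True F0 unfolding pm_def zj_def by simp
    then have "((\<lambda>t. (t * pmono \<alpha> (F t)) *\<^sub>R e1) has_vector_derivative (0 * pmono \<alpha> (F 0)) *\<^sub>R 0 + pm j *\<^sub>R e1) (at 0)"
      by (intro has_vector_derivative_scaleR has_vector_derivative_const)
    then show ?thesis using True by simp
  next
    case False
    then show ?thesis unfolding pm_def by simp
  qed
  have "((\<lambda>t. ((phi_c \<phi> e1 D (cc \<alpha> t)) ^^ Suc j) z) has_vector_derivative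
           blinfun_apply (Df zj) V + pm j *\<^sub>R e1) (at 0)"
    unfolding Feq by (rule has_vector_derivative_add[OF d1 d2])
  moreover have "blinfun_apply (Df zj) V + pm j *\<^sub>R e1 = (\<Sum>i<Suc j. pm i *\<^sub>R Wf Df \<phi> e1 z (Suc j) i)"
  proof -
    have "blinfun_apply (Df zj) V = (\<Sum>i<j. pm i *\<^sub>R blinfun_apply (Df zj) (Wf Df \<phi> e1 z j i))"
      unfolding V_def by (simp add: blinfun.sum_right blinfun.scaleR_right)
    also have "\<dots> = (\<Sum>i<j. pm i *\<^sub>R Wf Df \<phi> e1 z (Suc j) i)"
      by (rule sum.cong) (auto simp: zj_def)
    finally show ?thesis by simp
  qed
  moreover have "((phi_c \<phi> e1 D (cc \<alpha> 0)) ^^ Suc j) z = (\<phi> ^^ Suc j) z"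
    using F0 unfolding F_def zj_def by (simp add: phi_c_cc)
  ultimately show ?case unfolding pm_def by simp
qed

lemma row_struct:
  fixes \<phi> :: "'a::euclidean_space \<Rightarrow> 'a"
  assumes C2: "C2_diffeo \<phi>" and e1: "e1 \<in> Basis" and j: "1 \<le> j"
  shows "\<exists>T B. T \<subseteq> {..<j - 1} \<and> (\<forall>\<alpha>\<in>mindices D. row_grad \<phi> e1 D z j \<alpha> =
            pmono \<alpha> ((\<phi> ^^ (j - 1)) z) + (\<Sum>i\<in>T. B i * pmono \<alpha> ((\<phi> ^^ i) z)))"
proof -
  obtain Df :: "'a \<Rightarrow> ('a \<Rightarrow>\<^sub>L 'a)" where dphi: "\<And>x. (\<phi> has_derivative blinfun_apply (Df x)) (at x)"
    using C2 unfolding C2_diffeo_def C2_map_def by blast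
  obtain k where k: "j = Suc k" using j by (cases j) auto
  have "row_grad \<phi> e1 D z j \<alpha> =
            pmono \<alpha> ((\<phi> ^^ k) z) + (\<Sum>i<k. (Wf Df \<phi> e1 z j i \<bullet> e1) * pmono \<alpha> ((\<phi> ^^ i) z))"
    if a: "\<alpha> \<in> mindices D" for \<alpha>
  proof -
    define V where "V = (\<Sum>i<j. (if \<alpha> \<in> mindices D then pmono \<alpha> ((\<phi> ^^ i) z) else 0) *\<^sub>R Wf Df \<phi> e1 z j i)"
    have FV: "((\<lambda>t. ((phi_c \<phi> e1 D (cc \<alpha> t)) ^^ j) z) has_vector_derivative V) (at 0)"
      unfolding V_def by (rule conjunct1[OF deriv_struct[OF dphi]])
    have "((\<lambda>t. ((phi_c \<phi> e1 D (cc \<alpha> t)) ^^ j) z \<bullet> e1) has_vector_derivative V \<bullet> e1) (at 0)"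
      using bounded_linear.has_vector_derivative[OF bounded_linear_inner_left FV] .
    then have "((\<lambda>t. ((phi_c \<phi> e1 D (cc \<alpha> t)) ^^ j) z \<bullet> e1) has_field_derivative V \<bullet> e1) (at 0)"
      by (simp add: has_real_derivative_iff_has_vector_derivative)
    then have "row_grad \<phi> e1 D z j \<alpha> = V \<bullet> e1"
      unfolding row_grad_def grad_c0_def cc_def[symmetric] by (rule DERIV_imp_deriv)
    also have "V \<bullet> e1 = (\<Sum>i<j. pmono \<alpha> ((\<phi> ^^ i) z) * (Wf Df \<phi> e1 z j i \<bullet> e1))"
      unfolding V_def using a by (simp add: inner_sum_left)
    also have "\<dots> = pmono \<alpha> ((\<phi> ^^ k) z) + (\<Sum>i<k. (Wf Df \<phi> e1 z j i \<bullet> e1) * pmono \<alpha> ((\<phi> ^^ i) z))"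
      unfolding k using e1 by (simp add: mult.commute)
    finally show ?thesis .
  qed
  then show ?thesis using k by (intro exI[of _ "{..<k}"] exI[of _ "\<lambda>i. Wf Df \<phi> e1 z j i \<bullet> e1"]) auto
qed


lemma row_ok:
  fixes \<phi> :: "'a::euclidean_space \<Rightarrow> 'a" and P :: "'a list"
  assumes C2: "C2_diffeo \<phi>" and e1: "e1 \<in> Basis"
    and P: "\<And>i. i \<le> j \<Longrightarrow> P ! (off + i) = (\<phi> ^^ i) z"
  shows "\<exists>T B. T \<subseteq> {..<off + j} \<and> (\<forall>\<alpha>\<in>mindices D. row_grad \<phi> e1 D z (Suc j) \<alpha> =
            pmono \<alpha> (P ! (off + j)) + (\<Sum>i\<in>T. B i * pmono \<alpha> (P ! i)))"
proof -
  have ex0: "\<exists>T B. T \<subseteq> {..<Suc j - 1} \<and> (\<forall>\<alpha>\<in>mindices D. row_grad \<phi> e1 D z (Suc j) \<alpha> =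
            pmono \<alpha> ((\<phi> ^^ (Suc j - 1)) z) + (\<Sum>i\<in>T. B i * pmono \<alpha> ((\<phi> ^^ i) z)))"
    by (rule row_struct[OF C2 e1]) simp
  then have ex: "\<exists>T B. T \<subseteq> {..<j} \<and> (\<forall>\<alpha>\<in>mindices D. row_grad \<phi> e1 D z (Suc j) \<alpha> =
            pmono \<alpha> ((\<phi> ^^ j) z) + (\<Sum>i\<in>T. B i * pmono \<alpha> ((\<phi> ^^ i) z)))"
    by (simp only: diff_Suc_1)
  from ex obtain T0 B0 where T0: "T0 \<subseteq> {..<j}" and R: "\<forall>\<alpha>\<in>mindices D. row_grad \<phi> e1 D z (Suc j) \<alpha> =
            pmono \<alpha> ((\<phi> ^^ j) z) + (\<Sum>i\<in>T0. B0 i * pmono \<alpha> ((\<phi> ^^ i) z))"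
    by (elim exE conjE)
  have calc: "row_grad \<phi> e1 D z (Suc j) \<alpha> =
            pmono \<alpha> (P ! (off + j)) + (\<Sum>i\<in>(\<lambda>i. off + i) ` T0. B0 (i - off) * pmono \<alpha> (P ! i))"
    if a: "\<alpha> \<in> mindices D" for \<alpha>
  proof -
    have "(\<Sum>i\<in>(\<lambda>i. off + i) ` T0. B0 (i - off) * pmono \<alpha> (P ! i)) = (\<Sum>i\<in>T0. B0 i * pmono \<alpha> (P ! (off + i)))"
      by (subst sum.reindex) (auto simp: inj_on_def)
    also have "\<dots> = (\<Sum>i\<in>T0. B0 i * pmono \<alpha> ((\<phi> ^^ i) z))"
      by (rule sum.cong) (use T0 P in auto)
    finally show ?thesis using R a P[of j] by simp
  qed
  have sub: "(\<lambda>i. off + i) ` T0 \<subseteq> {..<off + j}" using T0 by auto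
  show ?thesis
    apply (rule exI[of _ "(\<lambda>i. off + i) ` T0"], rule exI[of _ "\<lambda>i. B0 (i - off)"])
    using calc sub by simp
qed

lemma part_b:
  fixes \<phi> :: "'a::euclidean_space \<Rightarrow> 'a" and e1 x1 y1 :: 'a and D k :: nat
  assumes C2: "C2_diffeo \<phi>" and e1: "e1 \<in> Basis" and k: "k \<le> D - 1"
    and dist: "distinct (map (\<lambda>j. (\<phi> ^^ j) x1) [0..<D - 1] @ map (\<lambda>j. (\<phi> ^^ j) y1) [0..<k])"
  shows "mat_rank (rows_mat D (Vrows \<phi> e1 D x1 @ take k (Vrows \<phi> e1 D y1))) = (D - 1) + k"
proof -
  define P where "P = map (\<lambda>j. (\<phi> ^^ j) x1) [0..<D - 1] @ map (\<lambda>j. (\<phi> ^^ j) y1) [0..<k]"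
  define rs where "rs = Vrows \<phi> e1 D x1 @ take k (Vrows \<phi> e1 D y1)"
  have lrs: "length rs = (D - 1) + k" unfolding rs_def Vrows_def using k by simp
  have lP: "length P = length rs" unfolding P_def lrs by simp
  have "\<forall>j<length rs. \<exists>T B. T \<subseteq> {..<j} \<and>
      (\<forall>\<alpha>\<in>mindices D. (rs ! j) \<alpha> = pmono \<alpha> (P ! j) + (\<Sum>i\<in>T. B i * pmono \<alpha> (P ! i)))"
  proof (intro allI impI)
    fix j assume j: "j < length rs"
    show "\<exists>T B. T \<subseteq> {..<j} \<and>
      (\<forall>\<alpha>\<in>mindices D. (rs ! j) \<alpha> = pmono \<alpha> (P ! j) + (\<Sum>i\<in>T. B i * pmono \<alpha> (P ! i)))"
    proof (cases "j < D - 1")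
      case True
      have rj: "rs ! j = row_grad \<phi> e1 D x1 (Suc j)"
        unfolding rs_def Vrows_def using True by (simp add: nth_append)
      have Pi: "P ! (0 + i) = (\<phi> ^^ i) x1" if "i \<le> j" for i
        unfolding P_def using that True by (simp add: nth_append)
      show ?thesis using row_ok[OF C2 e1 Pi] unfolding rj by simp
    next
      case False
      define j' where "j' = j - (D - 1)"
      have jj: "j = (D - 1) + j'" using False unfolding j'_def by simp
      have j'k: "j' < k" using j lrs jj by simp
      have lx: "length (Vrows \<phi> e1 D x1) = D - 1" unfolding Vrows_def by simp
      have "rs ! j = take k (Vrows \<phi> e1 D y1) ! j'"
        unfolding rs_def jj lx[symmetric] by (rule nth_append_length_plus)
      also have "\<dots> = row_grad \<phi> e1 D y1 (Suc j')" using j'k k unfolding Vrows_def by simp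
      finally have rj: "rs ! j = row_grad \<phi> e1 D y1 (Suc j')" .
      have lxP: "length (map (\<lambda>j. (\<phi> ^^ j) x1) [0..<D - 1]) = D - 1" by simp
      have Pi: "P ! ((D - 1) + i) = (\<phi> ^^ i) y1" if "i \<le> j'" for i
      proof -
        have "P ! ((D - 1) + i) = map (\<lambda>j. (\<phi> ^^ j) y1) [0..<k] ! i"
          unfolding P_def using nth_append_length_plus[of "map (\<lambda>j. (\<phi> ^^ j) x1) [0..<D - 1]" "map (\<lambda>j. (\<phi> ^^ j) y1) [0..<k]" i]
          unfolding lxP .
        then show ?thesis using that j'k by simp
      qed
      have R: "\<exists>T B. T \<subseteq> {..<(D - 1) + j'} \<and> (\<forall>\<alpha>\<in>mindices D. row_grad \<phi> e1 D y1 (Suc j') \<alpha> =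
            pmono \<alpha> (P ! ((D - 1) + j')) + (\<Sum>i\<in>T. B i * pmono \<alpha> (P ! i)))"
        by (rule row_ok[OF C2 e1 Pi])
      show ?thesis unfolding rj using R unfolding jj[symmetric] .
    qed
  qed
  note rows = this
  have le: "length rs \<le> 2 * D" using lrs k by simp
  have dP: "distinct P" using dist unfolding P_def .
  have "mat_rank (rows_mat D rs) = length rs"
    by (rule rank_tri[OF dP lP le rows])
  then show ?thesis unfolding rs_def[symmetric] lrs .
qed

lemma part_c:
  fixes \<phi> :: "'a::euclidean_space \<Rightarrow> 'a" and e1 x1 :: 'a and D Dp :: nat
  assumes C2: "C2_diffeo \<phi>" and e1: "e1 \<in> Basis" and Dp: "Dp \<le> 2 * D"
    and dist: "distinct (map (\<lambda>j. (\<phi> ^^ j) x1) [0..<Dp - 1])"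
  shows "mat_rank (rows_mat D (map (row_grad \<phi> e1 D x1) [1..<Dp])) = Dp - 1"
proof -
  define P where "P = map (\<lambda>j. (\<phi> ^^ j) x1) [0..<Dp - 1]"
  define rs where "rs = map (row_grad \<phi> e1 D x1) [1..<Dp]"
  have lrs: "length rs = Dp - 1" unfolding rs_def by simp
  have lP: "length P = length rs" unfolding P_def lrs by simp
  have "\<forall>j<length rs. \<exists>T B. T \<subseteq> {..<j} \<and>
      (\<forall>\<alpha>\<in>mindices D. (rs ! j) \<alpha> = pmono \<alpha> (P ! j) + (\<Sum>i\<in>T. B i * pmono \<alpha> (P ! i)))"
  proof (intro allI impI)
    fix j assume j: "j < length rs"
    have rj: "rs ! j = row_grad \<phi> e1 D x1 (Suc j)"
      unfolding rs_def using j lrs by simp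
    have Pi: "P ! (0 + i) = (\<phi> ^^ i) x1" if "i \<le> j" for i
      unfolding P_def using that j lrs by simp
    show "\<exists>T B. T \<subseteq> {..<j} \<and>
      (\<forall>\<alpha>\<in>mindices D. (rs ! j) \<alpha> = pmono \<alpha> (P ! j) + (\<Sum>i\<in>T. B i * pmono \<alpha> (P ! i)))"
      using row_ok[OF C2 e1 Pi] unfolding rj by simp
  qed
  note rows = this
  have le: "length rs \<le> 2 * D" using lrs Dp by simp
  have dP: "distinct P" using dist unfolding P_def .
  have "mat_rank (rows_mat D rs) = length rs"
    by (rule rank_tri[OF dP lP le rows])
  then show ?thesis unfolding rs_def[symmetric] lrs .
qed

theorem lemma11:
  fixes \<phi> :: "'a::euclidean_space \<Rightarrow> 'a" and e1 x1 y1 :: 'a and D k Dp :: nat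
  assumes "C2_diffeo \<phi>" and "e1 \<in> Basis"
  shows
    "(distinct (map (\<lambda>j. (\<phi> ^^ j) x1) [0..<D - 1] @ map (\<lambda>j. (\<phi> ^^ j) y1) [0..<D - 1])
        \<longrightarrow> mat_rank (rows_mat D (Vrows \<phi> e1 D x1 @ Vrows \<phi> e1 D y1))
            = 2 * (D - 1))
   \<and> (k \<le> D - 1 \<and>
      distinct (map (\<lambda>j. (\<phi> ^^ j) x1) [0..<D - 1] @ map (\<lambda>j. (\<phi> ^^ j) y1) [0..<k])
        \<longrightarrow> mat_rank (rows_mat D (Vrows \<phi> e1 D x1 @ take k (Vrows \<phi> e1 D y1)))
            = (D - 1) + k)
   \<and> (Dp \<le> 2 * D \<and> distinct (map (\<lambda>j. (\<phi> ^^ j) x1) [0..<Dp - 1])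
        \<longrightarrow> mat_rank (rows_mat D (map (row_grad \<phi> e1 D x1) [1..<Dp]))
            = Dp - 1)"
proof (intro conjI impI)
  assume d: "distinct (map (\<lambda>j. (\<phi> ^^ j) x1) [0..<D - 1] @ map (\<lambda>j. (\<phi> ^^ j) y1) [0..<D - 1])"
  have "take (D - 1) (Vrows \<phi> e1 D y1) = Vrows \<phi> e1 D y1" unfolding Vrows_def by simp
  then show "mat_rank (rows_mat D (Vrows \<phi> e1 D x1 @ Vrows \<phi> e1 D y1)) = 2 * (D - 1)"
    using part_b[OF assms(1) assms(2) le_refl d] by simp
next
  assume "k \<le> D - 1 \<and>
      distinct (map (\<lambda>j. (\<phi> ^^ j) x1) [0..<D - 1] @ map (\<lambda>j. (\<phi> ^^ j) y1) [0..<k])"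
  then show "mat_rank (rows_mat D (Vrows \<phi> e1 D x1 @ take k (Vrows \<phi> e1 D y1))) = (D - 1) + k"
    using part_b[OF assms] by blast
next
  assume "Dp \<le> 2 * D \<and> distinct (map (\<lambda>j. (\<phi> ^^ j) x1) [0..<Dp - 1])"
  then show "mat_rank (rows_mat D (map (row_grad \<phi> e1 D x1) [1..<Dp])) = Dp - 1"
    using part_c[OF assms] by blast
qed


end
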